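(* Under the standing setting below, let $Y\in L^1_{\tilde P}(\tilde\Omega)$. Then for every $k=1,\dots,N$ and $t\ge0$, $$\mathbf 1_{\{\tau_k\le t\}}\,\mathbb E^{\tilde P}\big[Y\mid\mathcal F_t\vee\mathcal H^1_t\vee\cdots\vee\mathcal H^k_t\big]=\mathbf 1_{\{\tau_k\le t\}}\,\mathbb E^{\tilde P}\big[Y\mid\mathcal F_t\vee\sigma(E_1)\vee\cdots\vee\sigma(E_k)\big]\quad\tilde P\text{-a.s.}$$
   Context: Single-prior setting. Let $(\Omega,\mathcal F,P)$ be a probability space, $\Omega$ Polish, $\mathcal F=\mathcal B(\Omega)$, with a filtration $\mathbb F=(\mathcal F_t)_{t\ge0}$ (not assumed to satisfy the usual conditions), $\mathcal F_\infty=\bigvee_{t}\mathcal F_t$. Let $(\hat\Omega,\mathcal B(\hat\Omega),\hat P)$ be a probability space ($\hat\Omega$ Polish) carrying random variables $E_1,\dots,E_N$ which are i.i.d. unit-exponentially distributed under $\hat P$. Set $(\tilde\Omega,\mathcal G,\tilde P)=(\Omega\times\hat\Omega,\mathcal B(\Omega)\otimes\mathcal B(\hat\Omega),P\otimes\hat P)$, write $\tilde\omega=(\omega,\hat\omega)$, and identify functions and sub-$\sigma$-algebras on one factor with their natural extensions to $\tilde\Omega$ (e.g. $X(\omega,\hat\omega)=X(\omega)$, $\mathcal A\equiv\mathcal A\otimes\{\emptyset,\hat\Omega\}$); in particular the $E_n$ are independent of $\mathcal F_\infty$ under $\tilde P$. Let $\tilde\lambda^1,\dots,\tilde\lambda^N$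 be nonnegative, measurable, $\mathbb F$-adapted processes on $\Omega$ with $\int_0^t\tilde\lambda^n_s ds<\infty$ for all $t<\infty$ and $\int_0^\infty\tilde\lambda^n_sds=+\infty$, $P$-a.s. Define $\tilde\tau_n=\inf\{t>0:\int_0^t\tilde\lambda^n_sds\ge E_n\}$, $\tau_n=\sum_{k=1}^n\tilde\tau_k$, $\tau_0=0$, $\tau_{N+1}=+\infty$, $\boldsymbol\tau=(\tau_1,\dots,\tau_N)$, $\boldsymbol\tau_{(k)}=(\tau_1,\dots,\tau_k)$; for a vector $\mathbf u$, $\mathbf u_{(k)}$ denotes its first $k$ entries. Let $\mathbb H^n=(\mathcal H^n_t)_{t\ge0}$ be the filtration generated by $(\mathbf 1_{\{\tau_n\le t\}})_{t\ge0}$, $\mathbb G^{(0)}=\mathbb F$, $\mathcal G^{(n)}_t=\mathcal F_t\vee\mathcal H^1_t\vee\cdots\vee\mathcal H^n_t$, $\mathcal G^{(n)}_\infty=\bigvee_t\mathcal G^{(n)}_t$. $L^1_{\tilde P}(\tilde\Omega)$ is the set of real random variables on $\tilde\Omega$ measurable w.r.t. $\mathcal G\vee\mathcal N^P_\infty$ ($\mathcal N^P_\infty$ = the $(P,\mathcal F_\infty)$-null sets) with $\mathbb E^{\tilde P}|X|<\infty$. For measurable $X$ on $\tilde\Omega$, $\mathbb E^{\hat P}[X](\omega):=\int_{\hat\Omega}X(\omega,\hat\omega)\hat P(d\hat\omega)$. *)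

theory Defs
  imports "HOL-Probability.Probability"
begin

definition tau_tilde ::
  "(nat \<Rightarrow> real \<Rightarrow> 'a \<Rightarrow> real) \<Rightarrow> (nat \<Rightarrow> 'b \<Rightarrow> real) \<Rightarrow> nat \<Rightarrow> 'a \<times> 'b \<Rightarrow> real" where
  "tau_tilde lam E n = (\<lambda>(w, w').
     Inf {t. 0 < t \<and> ennreal (E n w') \<le> (\<integral>\<^sup>+ s\<in>{0..t}. ennreal (lam n s w) \<partial>lborel)})"

definition tau ::
  "(nat \<Rightarrow> real \<Rightarrow> 'a \<Rightarrow> real) \<Rightarrow> (nat \<Rightarrow> 'b \<Rightarrow> real) \<Rightarrow> nat \<Rightarrow> 'a \<times> 'b \<Rightarrow> real" where
  "tau lam E n x = (\<Sum>j\<in>{1..n}. tau_tilde lam E j x)"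

definition F_infty :: "'a measure \<Rightarrow> (real \<Rightarrow> 'a measure) \<Rightarrow> 'a set set" where
  "F_infty P F = sigma_sets (space P) (\<Union>t\<in>{0..}. sets (F t))"

definition GN_measure :: "'a measure \<Rightarrow> 'b measure \<Rightarrow> (real \<Rightarrow> 'a measure) \<Rightarrow> ('a \<times> 'b) measure" where
  "GN_measure P Q F = sigma (space P \<times> space Q)
     (sets (P \<Otimes>\<^sub>M Q) \<union>
      {A \<times> space Q | A. \<exists>B\<in>F_infty P F. A \<subseteq> B \<and> emeasure P B = 0})"

definition G_sigma ::
  "'a measure \<Rightarrow> 'b measure \<Rightarrow> (real \<Rightarrow> 'a measure) \<Rightarrow> (nat \<Rightarrow> real \<Rightarrow> 'a \<Rightarrow> real)
   \<Rightarrow> (nat \<Rightarrow> 'b \<Rightarrow> real) \<Rightarrow> nat \<Rightarrow> real \<Rightarrow> ('a \<times> 'b) measure" where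
  "G_sigma P Q F lam E k t = sigma (space P \<times> space Q)
     ({A \<times> space Q | A. A \<in> sets (F t)} \<union>
      {{x \<in> space P \<times> space Q. tau lam E n x \<le> s} | n s. n \<in> {1..k} \<and> 0 \<le> s \<and> s \<le> t})"

definition FE_sigma ::
  "'a measure \<Rightarrow> 'b measure \<Rightarrow> (real \<Rightarrow> 'a measure)
   \<Rightarrow> (nat \<Rightarrow> 'b \<Rightarrow> real) \<Rightarrow> nat \<Rightarrow> real \<Rightarrow> ('a \<times> 'b) measure" where
  "FE_sigma P Q F E k t = sigma (space P \<times> space Q)
     ({A \<times> space Q | A. A \<in> sets (F t)} \<union>
      {space P \<times> {w' \<in> space Q. E n w' \<in> B} | n B. n \<in> {1..k} \<and> B \<in> sets borel})"

end

theory Submission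
  imports Defs
begin


definition aeq :: "'a measure \<Rightarrow> 'a set \<Rightarrow> 'a set \<Rightarrow> 'a set \<Rightarrow> bool" where
  "aeq M A B C \<longleftrightarrow> (\<exists>N\<in>null_sets M. \<forall>x\<in>A - N. x \<in> B \<longleftrightarrow> x \<in> C)"

definition cl :: "'a measure \<Rightarrow> 'a set set \<Rightarrow> 'a set \<Rightarrow> 'a set set" where
  "cl M S A = {C. \<exists>B\<in>S. aeq M A C B}"

lemma aeq_refl: "aeq M A B B"
  unfolding aeq_def by (rule bexI[of _ "{}"]) auto

lemma aeq_sym: "aeq M A B C \<Longrightarrow> aeq M A C B"
  unfolding aeq_def by blast

lemma aeq_trans: "aeq M A B C \<Longrightarrow> aeq M A C D \<Longrightarrow> aeq M A B D"
  unfolding aeq_def by (metis (no_types, lifting) Diff_iff UnCI null_sets.Un)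

lemma aeq_compl: "aeq M A B C \<Longrightarrow> aeq M A (UNIV - B) (UNIV - C)"
  unfolding aeq_def by auto

lemma aeq_UN:
  assumes "\<And>i::nat. aeq M A (B i) (C i)"
  shows "aeq M A (\<Union>i. B i) (\<Union>i. C i)"
proof -
  from assms obtain N where N: "\<And>i. N i \<in> null_sets M" "\<And>i. \<forall>x\<in>A - N i. x \<in> B i \<longleftrightarrow> x \<in> C i"
    unfolding aeq_def by metis
  have "(\<Union>i. N i) \<in> null_sets M" using N(1) by (rule null_sets_UN)
  then show ?thesis unfolding aeq_def using N(2) by (intro bexI[of _ "\<Union>i. N i"]) blast+
qed


lemma aeq_AE:
  assumes sp: "space M = UNIV" and ae: "AE x in M. x \<in> A \<longrightarrow> (x \<in> B \<longleftrightarrow> x \<in> C)"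
  shows "aeq M A B C"
proof -
  from ae obtain N where N: "{x\<in>space M. \<not> (x \<in> A \<longrightarrow> (x \<in> B \<longleftrightarrow> x \<in> C))} \<subseteq> N" "N \<in> null_sets M"
    by (rule AE_E) (auto simp: null_sets_def)
  show ?thesis unfolding aeq_def
  proof (rule bexI[OF _ N(2)], intro ballI)
    fix x assume "x \<in> A - N"
    then show "x \<in> B \<longleftrightarrow> x \<in> C" using N(1) sp by blast
  qed
qed

lemma sigma_algebra_cl:
  assumes S: "sigma_algebra UNIV S"
  shows "sigma_algebra UNIV (cl M S A)"
  unfolding sigma_algebra_iff2
proof (intro conjI allI ballI impI)
  show "cl M S A \<subseteq> Pow UNIV" by auto
  show "{} \<in> cl M S A" unfolding cl_def using S aeq_refl
    by (auto intro!: bexI[of _ "{}"] simp: sigma_algebra_iff2)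
next
  fix s assume "s \<in> cl M S A"
  then obtain B where "B \<in> S" "aeq M A s B" unfolding cl_def by auto
  then show "UNIV - s \<in> cl M S A" unfolding cl_def
    using S aeq_compl unfolding sigma_algebra_iff2 by blast
next
  fix F :: "nat \<Rightarrow> _" assume "range F \<subseteq> cl M S A"
  then have "\<forall>i. \<exists>B\<in>S. aeq M A (F i) B" unfolding cl_def by auto
  then obtain B where B: "\<And>i. B i \<in> S" "\<And>i. aeq M A (F i) (B i)" by metis
  have "(\<Union>i. B i) \<in> S" using S B(1) unfolding sigma_algebra_iff2 by blast
  moreover have "aeq M A (\<Union>i. F i) (\<Union>i. B i)" by (rule aeq_UN) (rule B(2))
  ultimately show "(\<Union>i. F i) \<in> cl M S A" unfolding cl_def by auto
qed

lemma cl_mono: "S \<subseteq> cl M S A"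
  unfolding cl_def using aeq_refl by blast

lemma aeq_A_cong:
  assumes AA: "aeq M UNIV A A'" and h: "aeq M A C B"
  shows "aeq M A' C B"
proof -
  obtain N0 where N0: "N0 \<in> null_sets M" "\<forall>x\<in>UNIV - N0. x \<in> A \<longleftrightarrow> x \<in> A'"
    using AA unfolding aeq_def by blast
  obtain N where N: "N \<in> null_sets M" "\<forall>x\<in>A - N. x \<in> C \<longleftrightarrow> x \<in> B"
    using h unfolding aeq_def by blast
  have "N \<union> N0 \<in> null_sets M" using N(1) N0(1) by blast
  moreover have "\<forall>x\<in>A' - (N \<union> N0). x \<in> C \<longleftrightarrow> x \<in> B" using N(2) N0(2) by blast
  ultimately show ?thesis unfolding aeq_def by blast
qed

lemma cl_A_cong: "aeq M UNIV A A' \<Longrightarrow> cl M S A = cl M S A'"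
  unfolding cl_def using aeq_A_cong[of M A A'] aeq_A_cong[of M A' A] aeq_sym[of M UNIV A A'] by blast



lemma cond_exp_trace:
  assumes M: "prob_space M" "space M = UNIV"
  and G: "subalgebra M G" and H: "subalgebra M H"
  and A: "A \<in> sets G"
  and HG: "sets H \<subseteq> cl M (sets G) A"
  and Y: "integrable M Y"
  shows "AE x in M. indicator A x * real_cond_exp M G Y x
     = indicator A x * real_cond_exp M (sigma UNIV (sets G \<union> sets H)) Y x"
proof -
  define K where "K = sigma UNIV (sets G \<union> sets H)"
  have sG: "space G = UNIV" "space H = UNIV" using G H M(2) unfolding subalgebra_def by auto
  have GM: "sets G \<subseteq> sets M" "sets H \<subseteq> sets M" using G H unfolding subalgebra_def by auto
  have sK: "space K = UNIV" "sets K = sigma_sets UNIV (sets G \<union> sets H)"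
    unfolding K_def using GM M(2) sets.space_closed[of M] by auto
  have subK: "subalgebra M K" unfolding subalgebra_def sK M(2)
    using GM sets.sigma_sets_subset[of "sets G \<union> sets H" M] M(2) by auto
  have sigG: "sigma_algebra UNIV (sets G)" using sets.sigma_algebra_axioms[of G] sG by simp
  have Kcl: "sets K \<subseteq> cl M (sets G) A" unfolding sK
    apply (rule sigma_algebra.sigma_sets_subset[OF sigma_algebra_cl[OF sigG]])
    using cl_mono HG by blast
  have GK: "subalgebra K G" unfolding subalgebra_def sK sG by auto
  interpret FM: prob_space M by fact
  interpret K: finite_measure_subalgebra M K by unfold_locales (rule subK)
  interpret G: finite_measure_subalgebra M G by unfold_locales (rule G)
  have AM[measurable]: "A \<in> sets M" using A GM by auto
  have AK: "A \<in> sets K" using A unfolding sK by auto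
  have Ymeas[measurable]: "Y \<in> borel_measurable M" using Y by auto
  define f where "f x = indicator A x * real_cond_exp M G Y x" for x
  have fG: "f \<in> borel_measurable G" unfolding f_def using A by measurable
  have fK: "f \<in> borel_measurable K" using measurable_from_subalg[OF GK fG] .
  have fint: "integrable M f" unfolding f_def
    using integrable_mult_indicator[OF AM G.real_cond_exp_int(1)[OF Y]] by simp
  have AYint: "integrable M (\<lambda>x. indicator A x * Y x)"
    using integrable_mult_indicator[OF AM Y] by simp
  have 1: "AE x in M. real_cond_exp M K (\<lambda>x. indicator A x * Y x) x = f x"
  proof (rule K.real_cond_exp_charact[OF _ AYint fint fK])
    fix C assume C: "C \<in> sets K"
    then obtain B N where B: "B \<in> sets G" "N \<in> null_sets M" "\<forall>x\<in>A - N. x \<in> C \<longleftrightarrow> x \<in> B"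
      using Kcl unfolding cl_def aeq_def by blast
    have CM[measurable]: "C \<in> sets M" using C subK unfolding subalgebra_def by auto
    have BM[measurable]: "B \<in> sets M" using B GM by auto
    have BAG: "B \<inter> A \<in> sets G" using B A by auto
    have ae: "AE x in M. indicator C x * indicator A x = (indicator (B \<inter> A) x :: real)"
      using AE_not_in[OF B(2)] by eventually_elim (use B(3) in \<open>auto simp: indicator_def\<close>)
    have "(\<integral>x\<in>C. indicator A x * Y x \<partial>M) = (\<integral>x. indicator (B \<inter> A) x * Y x \<partial>M)"
      unfolding set_lebesgue_integral_def
      by (rule integral_cong_AE) (use ae in \<open>auto elim!: eventually_mono simp: mult.assoc[symmetric]\<close>)
    also have "\<dots> = (\<integral>x\<in>B \<inter> A. Y x \<partial>M)" unfolding set_lebesgue_integral_def by simp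
    also have "\<dots> = (\<integral>x\<in>B \<inter> A. real_cond_exp M G Y x \<partial>M)"
      by (rule G.real_cond_exp_intA[OF Y BAG])
    also have "\<dots> = (\<integral>x. indicator (B \<inter> A) x * real_cond_exp M G Y x \<partial>M)"
      unfolding set_lebesgue_integral_def by simp
    also have "\<dots> = (\<integral>x\<in>C. f x \<partial>M)"
      unfolding set_lebesgue_integral_def f_def
      by (rule integral_cong_AE) (use ae in \<open>auto elim!: eventually_mono simp: mult.assoc[symmetric]\<close>)
    finally show "(\<integral>x\<in>C. indicator A x * Y x \<partial>M) = (\<integral>x\<in>C. f x \<partial>M)" .
  qed
  have 2: "AE x in M. real_cond_exp M K (\<lambda>x. indicator A x * Y x) x = indicator A x * real_cond_exp M K Y x"
    by (rule K.real_cond_exp_mult[OF borel_measurable_indicator[OF AK] Ymeas AYint])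
  show ?thesis using 1 2
  proof eventually_elim
    case (elim x)
    then show ?case unfolding f_def K_def by metis
  qed
qed



lemma cond_exp_trace2:
  assumes M: "prob_space M" "space M = UNIV"
  and G: "subalgebra M G" and H: "subalgebra M H"
  and A: "A \<in> sets G" and A': "A' \<in> sets H" and AA': "aeq M UNIV A A'"
  and HG: "sets H \<subseteq> cl M (sets G) A" and GH: "sets G \<subseteq> cl M (sets H) A"
  and Y: "integrable M Y"
  shows "AE x in M. indicator A x * real_cond_exp M G Y x = indicator A x * real_cond_exp M H Y x"
proof -
  have 1: "AE x in M. indicator A x * real_cond_exp M G Y x
     = indicator A x * real_cond_exp M (sigma UNIV (sets G \<union> sets H)) Y x"
    by (rule cond_exp_trace[OF M G H A HG Y])
  have GH': "sets G \<subseteq> cl M (sets H) A'" using GH cl_A_cong[OF AA'] by simp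
  have 2: "AE x in M. indicator A' x * real_cond_exp M H Y x
     = indicator A' x * real_cond_exp M (sigma UNIV (sets H \<union> sets G)) Y x"
    by (rule cond_exp_trace[OF M H G A' GH' Y])
  obtain N where N: "N \<in> null_sets M" "\<forall>x\<in>UNIV - N. x \<in> A \<longleftrightarrow> x \<in> A'"
    using AA' unfolding aeq_def by blast
  have 3: "AE x in M. indicator A x = (indicator A' x :: real)"
    using AE_not_in[OF N(1)] by eventually_elim (use N(2) in \<open>auto simp: indicator_def\<close>)
  have 2: "AE x in M. indicator A' x * real_cond_exp M H Y x
     = indicator A' x * real_cond_exp M (sigma UNIV (sets G \<union> sets H)) Y x"
    using 2 by (simp add: Un_commute)
  show ?thesis using 1 2 3
  proof eventually_elim
    case (elim x)
    then show ?case by metis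
  qed
qed



lemma hit:
  fixes V :: "real \<Rightarrow> ennreal" and e :: real
  assumes mono: "\<And>a b. a \<le> b \<Longrightarrow> V a \<le> V b"
    and z: "V 0 = 0"
    and rc: "\<And>r. 0 \<le> r \<Longrightarrow> V r = (INF n. V (r + 1 / Suc n))"
    and lc: "\<And>r. 0 < r \<Longrightarrow> V r = (SUP n. V (r - r / Suc (Suc n)))"
    and unb: "\<exists>r. ennreal e < V r"
    and e: "0 < e"
    and T: "T = Inf {t. 0 < t \<and> ennreal e \<le> V t}"
  shows "0 < T" "\<And>s. 0 \<le> s \<Longrightarrow> T \<le> s \<longleftrightarrow> ennreal e \<le> V s" "V T = ennreal e"
    "\<And>c. e \<le> c \<longleftrightarrow> (\<forall>q\<in>\<rat>. 0 \<le> q \<and> q < T \<longrightarrow> V q \<le> ennreal c)"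
proof -
  define S where "S = {t. 0 < t \<and> ennreal e \<le> V t}"
  have T': "T = Inf S" using T S_def by simp
  have epos: "0 < ennreal e" using e by simp
  have bdd: "bdd_below S" unfolding S_def by (rule bdd_belowI[of _ 0]) auto
  obtain r where r: "ennreal e < V r" using unb by blast
  have "0 < r"
  proof (rule ccontr)
    assume "\<not> 0 < r" then have "V r \<le> V 0" using mono by simp
    with r z show False by simp
  qed
  then have Sne: "S \<noteq> {}" unfolding S_def using r by (auto intro!: exI[of _ r] less_imp_le)
  have "(INF n. V (0 + 1 / Suc n)) < ennreal e" using rc[of 0] z epos by simp
  then obtain n where n: "V (1 / Suc n) < ennreal e" by (auto simp: INF_less_iff)
  have "1 / Suc n \<le> T" unfolding T'
  proof (rule cInf_greatest[OF Sne])
    fix t assume "t \<in> S"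
    then have "ennreal e \<le> V t" by (auto simp: S_def)
    show "1 / Suc n \<le> t"
    proof (rule ccontr)
      assume "\<not> 1 / Suc n \<le> t"
      then have "V t \<le> V (1 / Suc n)" using mono by simp
      with n \<open>ennreal e \<le> V t\<close> show False by simp
    qed
  qed
  moreover have "0 < 1 / real (Suc n)" by simp
  ultimately show Tpos: "0 < T" by linarith
  have closed: "ennreal e \<le> V T"
  proof -
    have "ennreal e \<le> V (T + 1 / Suc m)" for m
    proof -
      have "Inf S < T + 1 / Suc m" unfolding T'[symmetric] by simp
      then obtain t where "t \<in> S" "t < T + 1 / Suc m" using cInf_less_iff[OF Sne bdd] by blast
      then show ?thesis using mono[of t "T + 1 / Suc m"] by (auto simp: S_def)
    qed
    then have "ennreal e \<le> (INF m. V (T + 1 / Suc m))" by (auto intro: INF_greatest)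
    then show ?thesis using rc[of T] Tpos by simp
  qed
  show b: "T \<le> s \<longleftrightarrow> ennreal e \<le> V s" if s: "0 \<le> s" for s
  proof
    assume "T \<le> s" then show "ennreal e \<le> V s" using closed mono[of T s] by simp
  next
    assume es: "ennreal e \<le> V s"
    have "0 < s"
    proof (rule ccontr)
      assume "\<not> 0 < s" then have "s = 0" using s by simp
      then show False using es z epos by simp
    qed
    then have "s \<in> S" using es by (auto simp: S_def)
    then show "T \<le> s" unfolding T' by (rule cInf_lower[OF _ bdd])
  qed
  have pts: "0 \<le> T - T / Suc (Suc m) \<and> T - T / Suc (Suc m) < T" for m
    using Tpos by (auto simp: field_simps)
  have "V (T - T / Suc (Suc m)) \<le> ennreal e" for m
    using b[of "T - T / Suc (Suc m)"] pts[of m] by (auto simp: not_le[symmetric])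
  then have "V T \<le> ennreal e" using lc[OF Tpos] by (auto intro: SUP_least)
  then show VT: "V T = ennreal e" using closed by simp
  show "e \<le> c \<longleftrightarrow> (\<forall>q\<in>\<rat>. 0 \<le> q \<and> q < T \<longrightarrow> V q \<le> ennreal c)" for c
  proof
    assume "e \<le> c"
    then show "\<forall>q\<in>\<rat>. 0 \<le> q \<and> q < T \<longrightarrow> V q \<le> ennreal c"
    proof (intro ballI impI)
      fix q assume "q \<in> \<rat>" "0 \<le> q \<and> q < T"
      then have "V q \<le> V T" using mono by simp
      also have "\<dots> \<le> ennreal c" using VT \<open>e \<le> c\<close> by (simp add: ennreal_leI)
      finally show "V q \<le> ennreal c" .
    qed
  next
    assume H: "\<forall>q\<in>\<rat>. 0 \<le> q \<and> q < T \<longrightarrow> V q \<le> ennreal c"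
    have "V (T - T / Suc (Suc m)) \<le> ennreal c" for m
    proof -
      obtain q where q: "q \<in> \<rat>" "T - T / Suc (Suc m) < q" "q < T"
        using Rats_dense_in_real pts[of m] by blast
      then show ?thesis using H pts[of m] mono[of "T - T / Suc (Suc m)" q] by force
    qed
    then have "V T \<le> ennreal c" using lc[OF Tpos] by (auto intro: SUP_least)
    then have "ennreal e \<le> ennreal c" using VT by simp
    show "e \<le> c"
    proof (cases "0 \<le> c")
      case True then show ?thesis using \<open>ennreal e \<le> ennreal c\<close> by simp
    next
      case False then have "ennreal c = 0" by (simp add: ennreal_neg)
      then show ?thesis using \<open>ennreal e \<le> ennreal c\<close> epos by simp
    qed
  qed
qed



lemma Vprops:
  fixes g :: "real \<Rightarrow> real"
  assumes g[measurable]: "g \<in> borel_measurable borel"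
    and V: "\<And>r. V r = (\<integral>\<^sup>+ s. ennreal (g s) * indicator {0..r} s \<partial>lborel)"
    and fin: "\<And>r. 0 \<le> r \<Longrightarrow> V r < \<infinity>"
    and inf: "(\<integral>\<^sup>+ s. ennreal (g s) * indicator {0..} s \<partial>lborel) = \<infinity>"
  shows "\<And>a b. a \<le> b \<Longrightarrow> V a \<le> V b"
    and "V 0 = 0"
    and "\<And>r. 0 \<le> r \<Longrightarrow> V r = (INF n. V (r + 1 / Suc n))"
    and "\<And>r. 0 < r \<Longrightarrow> V r = (SUP n. V (r - r / Suc (Suc n)))"
    and "\<exists>r. ennreal e < V r"
proof -
  show mono: "V a \<le> V b" if "a \<le> b" for a b
    unfolding V using that by (intro nn_integral_mono) (auto simp: indicator_def)
  show "V 0 = 0" unfolding V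
  proof -
    have "(\<integral>\<^sup>+ s. ennreal (g s) * indicator {0..0} s \<partial>lborel) = (\<integral>\<^sup>+ (s::real). 0 \<partial>lborel)"
      by (rule nn_integral_cong_AE) (use AE_lborel_singleton[of 0] in \<open>auto elim!: eventually_mono\<close>)
    then show "(\<integral>\<^sup>+ s. ennreal (g s) * indicator {0..0} s \<partial>lborel) = 0" by simp
  qed
  show "V r = (INF n. V (r + 1 / Suc n))" if r: "0 \<le> r" for r
  proof -
    let ?f = "\<lambda>n s. ennreal (g s) * indicator {0..r + 1 / Suc n} s"
    have dec: "decseq ?f"
    proof (rule decseq_SucI, rule le_funI)
      fix n s
      have "r + 1 / Suc (Suc n) \<le> r + 1 / Suc n" by (simp add: frac_le)
      then show "?f (Suc n) s \<le> ?f n s" by (auto simp: indicator_def)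
    qed
    have pw: "(INF n. ?f n s) = ennreal (g s) * indicator {0..r} s" for s
    proof (cases "s \<in> {0..r}")
      case True then have "?f n s = ennreal (g s)" for n
        by (auto simp: indicator_def intro: order_trans[of s r])
      then show ?thesis using True by simp
    next
      case False
      show ?thesis
      proof (cases "0 \<le> s")
        case True
        with False have "r < s" by auto
        then obtain n where n: "inverse (real (Suc n)) < s - r" using reals_Archimedean[of "s - r"] by auto
        then have "r + 1 / Suc n < s" by (simp add: inverse_eq_divide)
        then have h1: "?f n s = 0" by (simp add: indicator_def)
        have h2: "(INF n. ?f n s) \<le> ?f n s" by (rule INF_lower) simp
        have "(INF n. ?f n s) \<le> 0" using h2 unfolding h1 .
        then show ?thesis using False by simp
      next
        case False then show ?thesis by (simp add: indicator_def)
      qed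
    qed
    have "V r = (\<integral>\<^sup>+ s. (INF n. ?f n s) \<partial>lborel)" unfolding V pw ..
    also have "\<dots> = (INF n. integral\<^sup>N lborel (?f n))"
      by (rule nn_integral_monotone_convergence_INF_decseq[OF dec])
        (use fin r in \<open>auto simp: V[symmetric]\<close>)
    finally show ?thesis unfolding V by simp
  qed
  show "V r = (SUP n. V (r - r / Suc (Suc n)))" if r: "0 < r" for r
  proof -
    let ?f = "\<lambda>n s. ennreal (g s) * indicator {0..r - r / Suc (Suc n)} s"
    have le: "r - r / Suc (Suc n) \<le> r - r / Suc (Suc m)" if "n \<le> m" for n m
      using r that by (auto intro!: divide_left_mono mult_pos_pos)
    have inc: "incseq ?f"
    proof (rule incseq_SucI, rule le_funI)
      fix n s
      have "r - r / Suc (Suc n) \<le> r - r / Suc (Suc (Suc n))" using le[of n "Suc n"] by simp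
      then show "?f n s \<le> ?f (Suc n) s" by (auto simp: indicator_def)
    qed
    have pw: "(SUP n. ?f n s) = ennreal (g s) * indicator {0..<r} s" for s
    proof (cases "s \<in> {0..<r}")
      case True
      then have "0 < r - s" by simp
      then have "0 < (r - s) / r" using r by simp
      then obtain n where n: "inverse (real (Suc n)) < (r - s) / r" using reals_Archimedean by blast
      have "r / Suc (Suc n) \<le> r / Suc n" using r by (intro divide_left_mono) auto
      also have "r / Suc n < r - s" using n r by (simp add: field_simps)
      finally have "s \<le> r - r / Suc (Suc n)" by simp
      then have "?f n s = ennreal (g s)" using True by (auto simp: indicator_def)
      moreover have "?f m s \<le> ennreal (g s)" for m by (auto simp: indicator_def)
      ultimately have "(SUP n. ?f n s) = ennreal (g s)"
        by (intro antisym SUP_least) (auto intro: SUP_upper2[of n])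
      then show ?thesis using True by simp
    next
      case False
      have z: "?f n s = 0" for n
      proof -
        have "r - r / Suc (Suc n) < r" using r by simp
        then show ?thesis using False by (auto simp: indicator_def)
      qed
      have "(SUP n. ?f n s) = 0" unfolding z by simp
      then show ?thesis using False by simp
    qed
    have "(\<integral>\<^sup>+ s. ennreal (g s) * indicator {0..<r} s \<partial>lborel) = V r" unfolding V
      by (rule nn_integral_cong_AE) (use AE_lborel_singleton[of r] in \<open>auto elim!: eventually_mono simp: indicator_def\<close>)
    then have "V r = (\<integral>\<^sup>+ s. (SUP n. ?f n s) \<partial>lborel)" unfolding pw by simp
    also have "\<dots> = (SUP n. integral\<^sup>N lborel (?f n))"
      by (rule nn_integral_monotone_convergence_SUP[OF inc]) simp
    finally show ?thesis unfolding V by simp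
  qed
  show "\<exists>r. ennreal e < V r"
  proof -
    let ?f = "\<lambda>n::nat. \<lambda>s. ennreal (g s) * indicator {0..real n} s"
    have inc: "incseq ?f"
      by (rule incseq_SucI, rule le_funI) (auto simp: indicator_def)
    have pw: "(SUP n. ?f n s) = ennreal (g s) * indicator {0..} s" for s
    proof (cases "0 \<le> s")
      case True
      obtain n where "s \<le> real n" using real_arch_simple by blast
      then have "?f n s = ennreal (g s)" using True by (auto simp: indicator_def)
      moreover have "?f m s \<le> ennreal (g s)" for m by (auto simp: indicator_def)
      ultimately have "(SUP n. ?f n s) = ennreal (g s)"
        by (intro antisym SUP_least) (auto intro: SUP_upper2[of n])
      then show ?thesis using True by simp
    next
      case False then show ?thesis by (simp add: indicator_def)
    qed
    have "\<infinity> = (\<integral>\<^sup>+ s. (SUP n. ?f n s) \<partial>lborel)" unfolding pw inf ..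
    also have "\<dots> = (SUP n. integral\<^sup>N lborel (?f n))"
      by (rule nn_integral_monotone_convergence_SUP[OF inc]) simp
    finally have "ennreal e < (SUP n. V (real n))" unfolding V by simp
    then show ?thesis by (auto simp: less_SUP_iff)
  qed
qed



lemma Ft_version:
  fixes P :: "'a measure" and f :: "real \<Rightarrow> 'a \<Rightarrow> real"
  assumes P: "prob_space P" and Ft: "subalgebra P Ft"
    and fm[measurable]: "(\<lambda>(s, w). f s w) \<in> borel_measurable (lborel \<Otimes>\<^sub>M P)"
    and adapt: "\<And>s. s \<in> {0..r} \<Longrightarrow> f s \<in> borel_measurable Ft"
  shows "AE w in P. (\<integral>\<^sup>+ s. ennreal (f s w) * indicator {0..r} s \<partial>lborel)
       = nn_cond_exp P Ft (\<lambda>w. \<integral>\<^sup>+ s. ennreal (f s w) * indicator {0..r} s \<partial>lborel) w"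
proof -
  interpret P: prob_space P by fact
  interpret F: finite_measure_subalgebra P Ft by unfold_locales (rule Ft)
  interpret PS: pair_sigma_finite lborel P by unfold_locales
  define g where "g s w = ennreal (f s w) * indicator {0..r} s" for s w
  have gm[measurable]: "(\<lambda>(s, w). g s w) \<in> borel_measurable (lborel \<Otimes>\<^sub>M P)"
    unfolding g_def by measurable
  have gm2[measurable]: "(\<lambda>(w, s). g s w) \<in> borel_measurable (P \<Otimes>\<^sub>M lborel)"
    using measurable_pair_swap[OF gm] by simp
  define X where "X w = (\<integral>\<^sup>+ s. g s w \<partial>lborel)" for w
  have Xm[measurable]: "X \<in> borel_measurable P"
    unfolding X_def by (rule lborel.borel_measurable_nn_integral) (use gm2 in simp)
  define Z where "Z = nn_cond_exp P Ft X"
  have Zm[measurable]: "Z \<in> borel_measurable P" "Z \<in> borel_measurable Ft" unfolding Z_def by auto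
  have swap: "(\<integral>\<^sup>+ w. X w * h w \<partial>P) = (\<integral>\<^sup>+ s. \<integral>\<^sup>+ w. g s w * h w \<partial>P \<partial>lborel)"
    if hm[measurable]: "h \<in> borel_measurable P" for h
  proof -
    have "(\<integral>\<^sup>+ w. X w * h w \<partial>P) = (\<integral>\<^sup>+ w. \<integral>\<^sup>+ s. g s w * h w \<partial>lborel \<partial>P)"
      unfolding X_def
      by (rule nn_integral_cong, rule nn_integral_multc[symmetric]) (use gm2 in \<open>auto\<close>)
    also have "\<dots> = (\<integral>\<^sup>+ s. \<integral>\<^sup>+ w. g s w * h w \<partial>P \<partial>lborel)"
      by (rule PS.Fubini') measurable
    finally show ?thesis .
  qed
  have "AE w in P. X w = Z w"
  proof (rule P.density_unique2[OF Xm Zm(1)])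
    fix A assume A[measurable]: "A \<in> sets P"
    define \<beta> where "\<beta> = nn_cond_exp P Ft (indicator A)"
    have \<beta>m[measurable]: "\<beta> \<in> borel_measurable P" "\<beta> \<in> borel_measurable Ft" unfolding \<beta>_def by auto
    have mid: "(\<integral>\<^sup>+ w. g s w * indicator A w \<partial>P) = (\<integral>\<^sup>+ w. g s w * \<beta> w \<partial>P)" for s
    proof (cases "s \<in> {0..r}")
      case True
      have fs[measurable]: "(\<lambda>w. ennreal (f s w)) \<in> borel_measurable Ft" using adapt[OF True] by measurable
      have "(\<integral>\<^sup>+ w. ennreal (f s w) * \<beta> w \<partial>P) = (\<integral>\<^sup>+ w. ennreal (f s w) * indicator A w \<partial>P)"
        unfolding \<beta>_def by (rule F.nn_cond_exp_intg) auto
      then show ?thesis using True by (simp add: g_def)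
    next
      case False then show ?thesis by (simp add: g_def)
    qed
    have "(\<integral>\<^sup>+ w. X w * indicator A w \<partial>P) = (\<integral>\<^sup>+ s. \<integral>\<^sup>+ w. g s w * indicator A w \<partial>P \<partial>lborel)" by (rule swap) simp
    also have "\<dots> = (\<integral>\<^sup>+ s. \<integral>\<^sup>+ w. g s w * \<beta> w \<partial>P \<partial>lborel)" by (simp add: mid)
    also have "\<dots> = (\<integral>\<^sup>+ w. X w * \<beta> w \<partial>P)" by (rule swap[symmetric]) simp
    also have "\<dots> = (\<integral>\<^sup>+ w. \<beta> w * X w \<partial>P)" by (simp add: mult.commute)
    also have "\<dots> = (\<integral>\<^sup>+ w. \<beta> w * Z w \<partial>P)" unfolding Z_def by (rule F.nn_cond_exp_intg[symmetric]) auto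
    also have "\<dots> = (\<integral>\<^sup>+ w. Z w * \<beta> w \<partial>P)" by (simp add: mult.commute)
    also have "\<dots> = (\<integral>\<^sup>+ w. Z w * indicator A w \<partial>P)" unfolding \<beta>_def by (rule F.nn_cond_exp_intg) auto
    finally show "(\<integral>\<^sup>+ w\<in>A. X w \<partial>P) = (\<integral>\<^sup>+ w\<in>A. Z w \<partial>P)" .
  qed
  then show ?thesis unfolding X_def Z_def g_def .
qed



locale setting =
  fixes P :: "'a::polish_space measure" and Q :: "'b::polish_space measure"
    and F :: "real \<Rightarrow> 'a measure"
    and N :: nat
    and E :: "nat \<Rightarrow> 'b \<Rightarrow> real"
    and lam :: "nat \<Rightarrow> real \<Rightarrow> 'a \<Rightarrow> real"
    and k :: nat and t :: real
  assumes P: "prob_space P" and P_borel: "sets P = sets borel"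
    and Q: "prob_space Q" and Q_borel: "sets Q = sets borel"
    and F_sub: "\<And>s. 0 \<le> s \<Longrightarrow> subalgebra P (F s)"
    and F_mono: "\<And>s r. 0 \<le> s \<Longrightarrow> s \<le> r \<Longrightarrow> sets (F s) \<subseteq> sets (F r)"
    and E_exp: "\<And>n. n \<in> {1..N} \<Longrightarrow> distributed Q lborel (E n) (exponential_density 1)"
    and lam_meas: "\<And>n. n \<in> {1..N} \<Longrightarrow>
          (\<lambda>(s, w). lam n s w) \<in> borel_measurable (restrict_space borel {0..} \<Otimes>\<^sub>M P)"
    and lam_adapted: "\<And>n s. n \<in> {1..N} \<Longrightarrow> 0 \<le> s \<Longrightarrow> lam n s \<in> borel_measurable (F s)"
    and lam_fin: "\<And>n. n \<in> {1..N} \<Longrightarrow>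
          AE w in P. \<forall>r\<ge>0. (\<integral>\<^sup>+ s\<in>{0..r}. ennreal (lam n s w) \<partial>lborel) < \<infinity>"
    and lam_inf: "\<And>n. n \<in> {1..N} \<Longrightarrow>
          AE w in P. (\<integral>\<^sup>+ s\<in>{0..}. ennreal (lam n s w) \<partial>lborel) = \<infinity>"
    and k: "k \<in> {1..N}" and t: "0 \<le> t"
begin

abbreviation "M \<equiv> completion (P \<Otimes>\<^sub>M Q)"
definition "Lm n s w = (if 0 \<le> s then lam n s w else 0)"
definition "V n r w = (\<integral>\<^sup>+ s. ennreal (Lm n s w) * indicator {0..r} s \<partial>lborel)"
abbreviation "tt \<equiv> tau_tilde lam E"
definition "Good x \<longleftrightarrow> (\<forall>n\<in>{1..N}. (\<forall>r\<ge>0. V n r (fst x) < \<infinity>) \<and>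
   (\<integral>\<^sup>+ s. ennreal (Lm n s (fst x)) * indicator {0..} s \<partial>lborel) = \<infinity> \<and> 0 < E n (snd x))"

lemma spaceP[simp]: "space P = UNIV" using sets_eq_imp_space_eq[OF P_borel] by simp
lemma spaceQ[simp]: "space Q = UNIV" using sets_eq_imp_space_eq[OF Q_borel] by simp
lemma spaceM[simp]: "space M = UNIV" by (simp add: space_pair_measure)
lemma spaceF[simp]: "0 \<le> s \<Longrightarrow> space (F s) = UNIV" using F_sub[of s] by (simp add: subalgebra_def)

interpretation PP: prob_space P by (rule P)
interpretation QQ: prob_space Q by (rule Q)
interpretation PQ: pair_prob_space P Q by unfold_locales

lemma probM: "prob_space M" by (rule PQ.prob_space_completion)

lemma measP: "measurable P X = measurable borel X"
  by (rule measurable_cong_sets[OF P_borel refl])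
lemma measQ: "measurable Q X = measurable borel X"
  by (rule measurable_cong_sets[OF Q_borel refl])

lemma Lm_meas[measurable]: "n \<in> {1..N} \<Longrightarrow> (\<lambda>(s, w). Lm n s w) \<in> borel_measurable (lborel \<Otimes>\<^sub>M P)"
proof -
  assume n: "n \<in> {1..N}"
  have m0: "(\<lambda>x::real \<times> 'a. (max 0 (fst x), snd x)) \<in> measurable (lborel \<Otimes>\<^sub>M P) (restrict_space borel {0..} \<Otimes>\<^sub>M P)"
  proof (rule measurable_Pair)
    have "(\<lambda>x::real \<times> 'a. max 0 (fst x)) \<in> borel_measurable (lborel \<Otimes>\<^sub>M P)"
    proof -
      have c: "(\<lambda>x::real. max 0 x) \<in> borel_measurable borel"
        by (rule borel_measurable_continuous_onI) (intro continuous_intros)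
      then have c': "(\<lambda>x::real. max 0 x) \<in> borel_measurable lborel" by simp
      show ?thesis by (rule measurable_compose[OF measurable_fst c'])
    qed
    then show "(\<lambda>x::real \<times> 'a. max 0 (fst x)) \<in> measurable (lborel \<Otimes>\<^sub>M P) (restrict_space borel {0..})"
      by (simp add: measurable_restrict_space2_iff)
  qed simp
  have h: "(\<lambda>x::real \<times> 'a. lam n (max 0 (fst x)) (snd x)) \<in> borel_measurable (lborel \<Otimes>\<^sub>M P)"
    using measurable_compose[OF m0 lam_meas[OF n]] by simp
  have pr: "{x \<in> space (lborel \<Otimes>\<^sub>M P). 0 \<le> fst (x::real \<times> 'a)} \<in> sets (lborel \<Otimes>\<^sub>M P)"
    by measurable
  have meas: "(\<lambda>x::real \<times> 'a. if 0 \<le> fst x then lam n (max 0 (fst x)) (snd x) else 0) \<in> borel_measurable (lborel \<Otimes>\<^sub>M P)"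
    by (rule measurable_If[OF h _ pr]) simp
  show ?thesis
  proof (rule measurable_cong[THEN iffD2, OF _ meas])
    fix x :: "real \<times> 'a"
    show "(\<lambda>(s, w). Lm n s w) x = (if 0 \<le> fst x then lam n (max 0 (fst x)) (snd x) else 0)"
      by (cases x) (simp add: Lm_def max_def)
  qed
qed

lemma Lm_meas2[measurable]: "n \<in> {1..N} \<Longrightarrow> (\<lambda>(w, s). Lm n s w) \<in> borel_measurable (P \<Otimes>\<^sub>M lborel)"
  using measurable_pair_swap[OF Lm_meas] by simp

lemma V_meas[measurable]: "n \<in> {1..N} \<Longrightarrow> V n r \<in> borel_measurable P"
  unfolding V_def by (rule lborel.borel_measurable_nn_integral) (simp add: split_beta')

lemma E_meas[measurable]: "n \<in> {1..N} \<Longrightarrow> E n \<in> borel_measurable Q"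
  using distributed_measurable[OF E_exp] by (simp add: measQ)

lemma V_eq: "(\<integral>\<^sup>+ s\<in>{0..r}. ennreal (lam n s w) \<partial>lborel) = V n r w"
  unfolding V_def by (rule nn_integral_cong) (auto simp: Lm_def indicator_def)

lemma Vinf_eq: "(\<integral>\<^sup>+ s\<in>{0..}. ennreal (lam n s w) \<partial>lborel) = (\<integral>\<^sup>+ s. ennreal (Lm n s w) * indicator {0..} s \<partial>lborel)"
  by (rule nn_integral_cong) (auto simp: Lm_def indicator_def)

lemma tt_eq: "tt n x = Inf {r. 0 < r \<and> ennreal (E n (snd x)) \<le> V n r (fst x)}"
  unfolding tau_tilde_def by (cases x) (simp only: V_eq prod.case fst_conv snd_conv)

end


context setting begin

interpretation PP: prob_space P by (rule P)
interpretation QQ: prob_space Q by (rule Q)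
interpretation PQ: pair_prob_space P Q by unfold_locales

lemma UQ: "UNIV \<in> sets Q" using sets.top[of Q] by simp
lemma UP: "UNIV \<in> sets P" using sets.top[of P] by simp

lemma AE_fst: assumes "AE w in P. \<phi> w" shows "AE x in M. \<phi> (fst x)"
proof -
  from assms obtain N where N: "{w \<in> space P. \<not> \<phi> w} \<subseteq> N" "emeasure P N = 0" "N \<in> sets P"
    by (rule AE_E)
  have "N \<times> space Q \<in> null_sets (P \<Otimes>\<^sub>M Q)"
    using N by (intro QQ.times_in_null_sets1) (auto simp: null_sets_def UQ)
  moreover have "{x \<in> space (P \<Otimes>\<^sub>M Q). \<not> \<phi> (fst x)} \<subseteq> N \<times> space Q"
    using N(1) by (auto simp: space_pair_measure)
  ultimately have "AE x in P \<Otimes>\<^sub>M Q. \<phi> (fst x)" by (rule AE_I')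
  then show ?thesis by (rule AE_completion)
qed

lemma AE_snd: assumes "AE w in Q. \<phi> w" shows "AE x in M. \<phi> (snd x)"
proof -
  from assms obtain N where N: "{w \<in> space Q. \<not> \<phi> w} \<subseteq> N" "emeasure Q N = 0" "N \<in> sets Q"
    by (rule AE_E)
  have "space P \<times> N \<in> null_sets (P \<Otimes>\<^sub>M Q)"
    using N by (intro QQ.times_in_null_sets2) (auto simp: null_sets_def UP)
  moreover have "{x \<in> space (P \<Otimes>\<^sub>M Q). \<not> \<phi> (snd x)} \<subseteq> space P \<times> N"
    using N(1) by (auto simp: space_pair_measure)
  ultimately have "AE x in P \<Otimes>\<^sub>M Q. \<phi> (snd x)" by (rule AE_I')
  then show ?thesis by (rule AE_completion)
qed

lemma AE_Epos: assumes n: "n \<in> {1..N}" shows "AE w in Q. 0 < E n w"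
proof -
  have p: "\<P>(x in Q. E n x \<le> 0) = 1 - exp (- 0 * 1)"
    by (rule QQ.exponential_distributedD_le[OF E_exp[OF n]]) auto
  have m: "{x \<in> space Q. E n x \<le> 0} \<in> sets Q" using E_meas[OF n] by measurable
  have "{x \<in> space Q. E n x \<le> 0} \<in> null_sets Q"
    using p m by (simp add: null_sets_def QQ.emeasure_eq_measure)
  from AE_not_in[OF this] show ?thesis by eventually_elim auto
qed

lemma AE_good: "AE x in M. Good x"
  unfolding Good_def
proof (rule eventually_ball_finite[OF finite_atLeastAtMost], intro ballI)
  fix n assume n: "n \<in> {1..N}"
  have 1: "AE x in M. \<forall>r\<ge>0. V n r (fst x) < \<infinity>"
    using AE_fst[OF lam_fin[OF n]] by (simp add: V_eq)
  have 2: "AE x in M. (\<integral>\<^sup>+ s. ennreal (Lm n s (fst x)) * indicator {0..} s \<partial>lborel) = \<infinity>"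
    using AE_fst[OF lam_inf[OF n]] by (simp add: Vinf_eq)
  have 3: "AE x in M. 0 < E n (snd x)" by (rule AE_snd[OF AE_Epos[OF n]])
  show "AE x in M. (\<forall>r\<ge>0. V n r (fst x) < \<infinity>) \<and>
      (\<integral>\<^sup>+ s. ennreal (Lm n s (fst x)) * indicator {0..} s \<partial>lborel) = \<infinity> \<and> 0 < E n (snd x)"
    using 1 2 3 by eventually_elim auto
qed

lemma hit_good:
  assumes n: "n \<in> {1..N}" and G: "Good x"
  shows "0 < tt n x"
    "\<And>s. 0 \<le> s \<Longrightarrow> tt n x \<le> s \<longleftrightarrow> ennreal (E n (snd x)) \<le> V n s (fst x)"
    "\<And>c. E n (snd x) \<le> c \<longleftrightarrow> (\<forall>q\<in>\<rat>. 0 \<le> q \<and> q < tt n x \<longrightarrow> V n q (fst x) \<le> ennreal c)"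
proof -
  have gm: "(\<lambda>s. Lm n s (fst x)) \<in> borel_measurable borel"
    using measurable_Pair2[OF Lm_meas2[OF n], of "fst x"] by simp
  have Gn: "(\<forall>r\<ge>0. V n r (fst x) < \<infinity>)" "(\<integral>\<^sup>+ s. ennreal (Lm n s (fst x)) * indicator {0..} s \<partial>lborel) = \<infinity>"
    "0 < E n (snd x)" using G n unfolding Good_def by auto
  note VP = Vprops[OF gm, of "\<lambda>r. V n r (fst x)", OF V_def Gn(1)[rule_format] Gn(2)]
  note H = hit[of "\<lambda>r. V n r (fst x)", OF VP(1) VP(2) VP(3) VP(4) VP(5) Gn(3) tt_eq]
  show "0 < tt n x" by (rule H(1))
  show "\<And>s. 0 \<le> s \<Longrightarrow> tt n x \<le> s \<longleftrightarrow> ennreal (E n (snd x)) \<le> V n s (fst x)" by (rule H(2))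
  show "\<And>c. E n (snd x) \<le> c \<longleftrightarrow> (\<forall>q\<in>\<rat>. 0 \<le> q \<and> q < tt n x \<longrightarrow> V n q (fst x) \<le> ennreal c)" by (rule H(4))
qed

end

context setting begin

interpretation PP: prob_space P by (rule P)
interpretation QQ: prob_space Q by (rule Q)
interpretation PQ: pair_prob_space P Q by unfold_locales

lemma spacePQ[simp]: "space (P \<Otimes>\<^sub>M Q) = UNIV" by (simp add: space_pair_measure)

lemma tt_meas: assumes n: "n \<in> {1..N}" shows "tt n \<in> borel_measurable M"
proof -
  have Vm[measurable]: "V n s \<in> borel_measurable P" for s using V_meas[OF n] .
  have Em[measurable]: "E n \<in> borel_measurable Q" using E_meas[OF n] .
  have "{x \<in> space M. tt n x \<le> s} \<in> sets M" for s
  proof (cases "0 \<le> s")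
    case True
    have B: "{x \<in> space M. ennreal (E n (snd x)) \<le> V n s (fst x)} \<in> sets M"
    proof -
      have "{x \<in> space (P \<Otimes>\<^sub>M Q). ennreal (E n (snd x)) \<le> V n s (fst x)} \<in> sets (P \<Otimes>\<^sub>M Q)"
        by measurable
      then show ?thesis by (simp add: space_pair_measure)
    qed
    have ae: "AE x in M. x \<in> {x \<in> space M. ennreal (E n (snd x)) \<le> V n s (fst x)} \<longleftrightarrow> x \<in> {x \<in> space M. tt n x \<le> s}"
      using AE_good by eventually_elim (use hit_good(2)[OF n _ True] in auto)
    show ?thesis by (rule completion.in_sets_AE[OF ae B]) auto
  next
    case False
    have ae: "AE x in M. x \<in> {} \<longleftrightarrow> x \<in> {x \<in> space M. tt n x \<le> s}"
      using AE_good by eventually_elim (use hit_good(1)[OF n] False in force)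
    show ?thesis by (rule completion.in_sets_AE[OF ae]) auto
  qed
  then show ?thesis by (simp add: borel_measurable_iff_le)
qed

lemma tau_meas: assumes n: "n \<le> N" shows "tau lam E n \<in> borel_measurable M"
proof -
  have "(\<lambda>x. \<Sum>j\<in>{1..n}. tt j x) \<in> borel_measurable M"
    by (rule borel_measurable_sum) (rule tt_meas, use n in auto)
  then show ?thesis unfolding tau_def[abs_def] by simp
qed

abbreviation "GG \<equiv> G_sigma P Q F lam E k t"
abbreviation "HH \<equiv> FE_sigma P Q F E k t"
definition "gensG = {A \<times> space Q | A. A \<in> sets (F t)} \<union>
      {{x \<in> space P \<times> space Q. tau lam E n x \<le> s} | n s. n \<in> {1..k} \<and> 0 \<le> s \<and> s \<le> t}"
definition "gensH = {A \<times> space Q | A. A \<in> sets (F t)} \<union>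
      {space P \<times> {w' \<in> space Q. E n w' \<in> B} | n B. n \<in> {1..k} \<and> B \<in> sets borel}"

lemma sets_GG: "sets GG = sigma_sets UNIV gensG" and space_GG[simp]: "space GG = UNIV"
  unfolding G_sigma_def gensG_def by (auto simp: sets_measure_of_conv space_measure_of_conv)
lemma sets_HH: "sets HH = sigma_sets UNIV gensH" and space_HH[simp]: "space HH = UNIV"
  unfolding FE_sigma_def gensH_def by (auto simp: sets_measure_of_conv space_measure_of_conv)

lemma Ft_sub: "sets (F t) \<subseteq> sets P" using F_sub[OF t] by (simp add: subalgebra_def)

lemma rect_M: "A \<in> sets (F t) \<Longrightarrow> A \<times> UNIV \<in> sets M"
proof -
  assume "A \<in> sets (F t)"
  then have "A \<in> sets P" using Ft_sub by auto
  then have "A \<times> space Q \<in> sets (P \<Otimes>\<^sub>M Q)" by (intro pair_measureI) (auto simp: UP UQ)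
  then show ?thesis by simp
qed

lemma kN: "k \<le> N" using k by simp

lemma gensG_M: "gensG \<subseteq> sets M"
proof
  fix X assume "X \<in> gensG"
  then consider (a) A where "X = A \<times> UNIV" "A \<in> sets (F t)"
    | (b) n s where "X = {x. tau lam E n x \<le> s}" "n \<in> {1..k}"
    unfolding gensG_def by auto
  then show "X \<in> sets M"
  proof cases
    case a then show ?thesis using rect_M by simp
  next
    case b
    have [measurable]: "tau lam E n \<in> borel_measurable M" using tau_meas b(2) kN by simp
    have "{x \<in> space M. tau lam E n x \<le> s} \<in> sets M" by measurable
    then show ?thesis using b by (simp add: space_pair_measure)
  qed
qed

lemma gensH_M: "gensH \<subseteq> sets M"
proof
  fix X assume "X \<in> gensH"
  then consider (a) A where "X = A \<times> UNIV" "A \<in> sets (F t)"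
    | (b) n B where "X = UNIV \<times> {w'. E n w' \<in> B}" "n \<in> {1..k}" "B \<in> sets borel"
    unfolding gensH_def by auto
  then show "X \<in> sets M"
  proof cases
    case a then show ?thesis using rect_M by simp
  next
    case b
    have "E n \<in> borel_measurable Q" using E_meas b(2) kN by simp
    then have "{w'. E n w' \<in> B} \<in> sets Q" using b(3) measurable_sets[of "E n" Q borel B] by (simp add: vimage_def)
    then have "space P \<times> {w'. E n w' \<in> B} \<in> sets (P \<Otimes>\<^sub>M Q)" by (intro pair_measureI) (auto simp: UP UQ)
    then show ?thesis using b by simp
  qed
qed

lemma sub_GG: "subalgebra M GG"
  unfolding subalgebra_def using sets.sigma_sets_subset[OF gensG_M] by (simp add: sets_GG)
lemma sub_HH: "subalgebra M HH"
  unfolding subalgebra_def using sets.sigma_sets_subset[OF gensH_M] by (simp add: sets_HH)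

lemma sa_GG: "sigma_algebra UNIV (sets GG)" using sets.sigma_algebra_axioms[of GG] by simp
lemma sa_HH: "sigma_algebra UNIV (sets HH)" using sets.sigma_algebra_axioms[of HH] by simp

end


lemma cl_sets: "sigma_algebra UNIV S \<Longrightarrow> sets (sigma UNIV (cl M S A)) = cl M S A"
  using sigma_algebra.sigma_sets_eq[OF sigma_algebra_cl[of S M A]] by (simp add: sets_measure_of_conv)

lemma cl_trans: "C' \<in> cl M S A \<Longrightarrow> aeq M A C C' \<Longrightarrow> C \<in> cl M S A"
  unfolding cl_def using aeq_trans by blast

lemma cl_UNIV_sub: "cl M S UNIV \<subseteq> cl M S A"
  unfolding cl_def aeq_def by blast

lemma sum_min:
  fixes a :: "nat \<Rightarrow> real"
  assumes fin: "finite I" and nn: "\<And>j. j \<in> I \<Longrightarrow> 0 \<le> a j"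
  shows "sum a I \<le> t \<longleftrightarrow> ((\<forall>j\<in>I. a j \<le> t) \<and> (\<Sum>j\<in>I. min (a j) t) \<le> t)"
proof
  assume h: "sum a I \<le> t"
  have le: "\<forall>j\<in>I. a j \<le> t"
  proof
    fix j assume j: "j \<in> I"
    have "a j \<le> sum a I" by (rule member_le_sum[OF j _ fin]) (use nn in auto)
    then show "a j \<le> t" using h by simp
  qed
  have "(\<Sum>j\<in>I. min (a j) t) = sum a I" by (rule sum.cong) (use le in auto)
  then show "(\<forall>j\<in>I. a j \<le> t) \<and> (\<Sum>j\<in>I. min (a j) t) \<le> t" using h le by simp
next
  assume h: "(\<forall>j\<in>I. a j \<le> t) \<and> (\<Sum>j\<in>I. min (a j) t) \<le> t"
  have eq: "(\<Sum>j\<in>I. min (a j) t) = sum a I" by (rule sum.cong) (use h in auto)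
  have h2: "(\<Sum>j\<in>I. min (a j) t) \<le> t" using h by blast
  show "sum a I \<le> t" using eq h2 by linarith
qed

context setting begin

interpretation PP: prob_space P by (rule P)
interpretation QQ: prob_space Q by (rule Q)
interpretation PQ: pair_prob_space P Q by unfold_locales

definition "Jv n r = nn_cond_exp P (F t) (V n r)"

lemma Jv_meas[measurable]: "Jv n r \<in> borel_measurable (F t)"
  unfolding Jv_def by simp

lemma Jv_ae: assumes n: "n \<in> {1..N}" and r: "0 \<le> r" "r \<le> t"
  shows "AE x in M. V n r (fst x) = Jv n r (fst x)"
proof -
  have adapt: "Lm n s \<in> borel_measurable (F t)" if s: "s \<in> {0..r}" for s
  proof -
    have "Lm n s = lam n s" using s by (auto simp: Lm_def fun_eq_iff)
    moreover have "lam n s \<in> borel_measurable (F s)" using lam_adapted[OF n] s by auto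
    moreover have "subalgebra (F t) (F s)" unfolding subalgebra_def
      using F_mono[of s t] s r by auto
    ultimately show ?thesis using measurable_from_subalg by metis
  qed
  have "AE w in P. (\<integral>\<^sup>+ s. ennreal (Lm n s w) * indicator {0..r} s \<partial>lborel)
       = nn_cond_exp P (F t) (\<lambda>w. \<integral>\<^sup>+ s. ennreal (Lm n s w) * indicator {0..r} s \<partial>lborel) w"
    by (rule Ft_version[OF P F_sub[OF t] Lm_meas[OF n] adapt])
  then have "AE w in P. V n r w = Jv n r w"
    unfolding Jv_def V_def[abs_def] .
  then show ?thesis by (rule AE_fst)
qed

lemma fst_meas_HH: assumes "\<phi> \<in> borel_measurable (F t)" shows "(\<lambda>x. \<phi> (fst x)) \<in> borel_measurable HH"
proof (rule measurableI)
  fix B :: "'c set" assume "B \<in> sets borel"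
  then have "\<phi> -` B \<in> sets (F t)" using measurable_sets[OF assms] t by (simp add: vimage_def)
  then have "(\<phi> -` B) \<times> space Q \<in> gensH" unfolding gensH_def by blast
  then have "(\<phi> -` B) \<times> space Q \<in> sets HH" unfolding sets_HH by auto
  moreover have "(\<lambda>x. \<phi> (fst x)) -` B \<inter> space HH = (\<phi> -` B) \<times> space Q" by auto
  ultimately show "(\<lambda>x. \<phi> (fst x)) -` B \<inter> space HH \<in> sets HH" by simp
qed auto

lemma fst_meas_GG: assumes "\<phi> \<in> borel_measurable (F t)" shows "(\<lambda>x. \<phi> (fst x)) \<in> borel_measurable GG"
proof (rule measurableI)
  fix B :: "'c set" assume "B \<in> sets borel"
  then have "\<phi> -` B \<in> sets (F t)" using measurable_sets[OF assms] t by (simp add: vimage_def)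
  then have "(\<phi> -` B) \<times> space Q \<in> gensG" unfolding gensG_def by blast
  then have "(\<phi> -` B) \<times> space Q \<in> sets GG" unfolding sets_GG by auto
  moreover have "(\<lambda>x. \<phi> (fst x)) -` B \<inter> space GG = (\<phi> -` B) \<times> space Q" by auto
  ultimately show "(\<lambda>x. \<phi> (fst x)) -` B \<inter> space GG \<in> sets GG" by simp
qed auto

lemma E_meas_HH: assumes n: "n \<in> {1..k}" shows "(\<lambda>x. E n (snd x)) \<in> borel_measurable HH"
proof (rule measurableI)
  fix B :: "real set" assume "B \<in> sets borel"
  then have "space P \<times> {w' \<in> space Q. E n w' \<in> B} \<in> gensH" unfolding gensH_def using n by blast
  then have "space P \<times> {w' \<in> space Q. E n w' \<in> B} \<in> sets HH" unfolding sets_HH by auto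
  moreover have "(\<lambda>x. E n (snd x)) -` B \<inter> space HH = space P \<times> {w' \<in> space Q. E n w' \<in> B}" by auto
  ultimately show "(\<lambda>x. E n (snd x)) -` B \<inter> space HH \<in> sets HH" by simp
qed auto

end


context setting begin

interpretation PP: prob_space P by (rule P)
interpretation QQ: prob_space Q by (rule Q)
interpretation PQ: pair_prob_space P Q by unfold_locales

abbreviation "A0 \<equiv> {x. tau lam E k x \<le> t}"
definition "SH = cl M (sets HH) UNIV"

lemma sets_MH: "sets (sigma UNIV SH) = SH" unfolding SH_def by (rule cl_sets[OF sa_HH])
lemma space_MH[simp]: "space (sigma UNIV SH) = UNIV" by (simp add: space_measure_of_conv)
lemma HH_SH: "sets HH \<subseteq> SH" unfolding SH_def by (rule cl_mono)
lemma SH_sa: "sigma_algebra UNIV SH" unfolding SH_def by (rule sigma_algebra_cl[OF sa_HH])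

lemma kN': "n \<in> {1..k} \<Longrightarrow> n \<in> {1..N}" using k by auto

lemma tt_le_H: assumes n: "n \<in> {1..k}" and s: "s \<le> t" shows "{x. tt n x \<le> s} \<in> SH"
proof (cases "0 \<le> s")
  case True
  have n': "n \<in> {1..N}" using kN'[OF n] .
  have [measurable]: "(\<lambda>x. E n (snd x)) \<in> borel_measurable HH" using E_meas_HH[OF n] .
  have [measurable]: "(\<lambda>x. Jv n s (fst x)) \<in> borel_measurable HH" using fst_meas_HH[OF Jv_meas] .
  have B: "{x \<in> space HH. ennreal (E n (snd x)) \<le> Jv n s (fst x)} \<in> sets HH" by measurable
  have "aeq M UNIV {x. tt n x \<le> s} {x \<in> space HH. ennreal (E n (snd x)) \<le> Jv n s (fst x)}"
  proof (rule aeq_AE[OF spaceM])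
    show "AE x in M. x \<in> UNIV \<longrightarrow> (x \<in> {x. tt n x \<le> s}) = (x \<in> {x \<in> space HH. ennreal (E n (snd x)) \<le> Jv n s (fst x)})"
      using AE_good Jv_ae[OF n' True s] by eventually_elim (use hit_good(2)[OF n' _ True] in auto)
  qed
  then show ?thesis unfolding SH_def cl_def using B by blast
next
  case False
  have n': "n \<in> {1..N}" using kN'[OF n] .
  have "aeq M UNIV {x. tt n x \<le> s} {}"
  proof (rule aeq_AE[OF spaceM])
    show "AE x in M. x \<in> UNIV \<longrightarrow> (x \<in> {x. tt n x \<le> s}) = (x \<in> {})"
      using AE_good by eventually_elim (use hit_good(1)[OF n'] False in force)
  qed
  then show ?thesis unfolding SH_def cl_def by blast
qed

lemma mt_H: assumes n: "n \<in> {1..k}" shows "(\<lambda>x. min (tt n x) t) \<in> borel_measurable (sigma UNIV SH)"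
  unfolding borel_measurable_iff_le
proof
  fix a
  show "{w \<in> space (sigma UNIV SH). min (tt n w) t \<le> a} \<in> sets (sigma UNIV SH)"
  proof (cases "t \<le> a")
    case True
    then have "{w \<in> space (sigma UNIV SH). min (tt n w) t \<le> a} = UNIV" by auto
    then show ?thesis using sets.top[of "sigma UNIV SH"] by simp
  next
    case False
    then have "{w \<in> space (sigma UNIV SH). min (tt n w) t \<le> a} = {x. tt n x \<le> a}" by auto
    then show ?thesis using tt_le_H[OF n] False unfolding sets_MH by simp
  qed
qed

lemma tau_sum: "tau lam E n x = (\<Sum>j\<in>{1..n}. tt j x)" unfolding tau_def by simp

lemma A0_H: "\<exists>A'\<in>sets HH. aeq M UNIV A0 A'"
proof -
  define A1 where "A1 = (\<Inter>j\<in>{1..k}. {x. tt j x \<le> t}) \<inter> {x. (\<Sum>j\<in>{1..k}. min (tt j x) t) \<le> t}"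
  have ne: "{1..k} \<noteq> {}" using k by auto
  have i1: "(\<Inter>j\<in>{1..k}. {x. tt j x \<le> t}) \<in> sets (sigma UNIV SH)"
    by (rule sets.finite_INT[OF finite_atLeastAtMost ne]) (use tt_le_H in \<open>auto simp: sets_MH\<close>)
  have [measurable]: "(\<lambda>x. \<Sum>j\<in>{1..k}. min (tt j x) t) \<in> borel_measurable (sigma UNIV SH)"
    by (rule borel_measurable_sum) (rule mt_H)
  have i2: "{x \<in> space (sigma UNIV SH). (\<Sum>j\<in>{1..k}. min (tt j x) t) \<le> t} \<in> sets (sigma UNIV SH)"
    by measurable
  have "A1 \<in> SH" unfolding A1_def using sets.Int[OF i1 i2] by (simp add: sets_MH)
  then obtain A' where A': "A' \<in> sets HH" "aeq M UNIV A1 A'" unfolding SH_def cl_def by blast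
  have "aeq M UNIV A0 A1"
  proof (rule aeq_AE[OF spaceM])
    show "AE x in M. x \<in> UNIV \<longrightarrow> (x \<in> A0) = (x \<in> A1)"
      using AE_good
    proof eventually_elim
      case (elim x)
      have nn: "\<And>j. j \<in> {1..k} \<Longrightarrow> 0 \<le> tt j x" using hit_good(1)[OF kN' elim] by (simp add: less_imp_le)
      show ?case unfolding A1_def tau_sum using sum_min[of "{1..k}" "\<lambda>j. tt j x" t, OF finite_atLeastAtMost nn] by auto
    qed
  qed
  then show ?thesis using A' aeq_trans by blast
qed

lemma GG_H: "sets GG \<subseteq> cl M (sets HH) A0"
  unfolding sets_GG
proof (rule sigma_algebra.sigma_sets_subset[OF sigma_algebra_cl[OF sa_HH]])
  show "gensG \<subseteq> cl M (sets HH) A0"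
  proof
    fix X assume "X \<in> gensG"
    then consider (a) A where "X = A \<times> space Q" "A \<in> sets (F t)"
      | (b) n s where "X = {x. tau lam E n x \<le> s}" "n \<in> {1..k}" "0 \<le> s" "s \<le> t"
      unfolding gensG_def by auto
    then show "X \<in> cl M (sets HH) A0"
    proof cases
      case a
      then have "X \<in> gensH" unfolding gensH_def by blast
      then have "X \<in> sets HH" unfolding sets_HH by auto
      then show ?thesis using cl_mono by blast
    next
      case b
      have nk: "{1..n} \<subseteq> {1..k}" using b(2) by auto
      have [measurable]: "(\<lambda>x. \<Sum>j\<in>{1..n}. min (tt j x) t) \<in> borel_measurable (sigma UNIV SH)"
        by (rule borel_measurable_sum) (rule mt_H, use nk in auto)
      have "{x \<in> space (sigma UNIV SH). (\<Sum>j\<in>{1..n}. min (tt j x) t) \<le> s} \<in> sets (sigma UNIV SH)"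
        by measurable
      then have "{x. (\<Sum>j\<in>{1..n}. min (tt j x) t) \<le> s} \<in> SH"
        unfolding sets_MH by simp
      then have B: "{x. (\<Sum>j\<in>{1..n}. min (tt j x) t) \<le> s} \<in> cl M (sets HH) A0"
        using cl_UNIV_sub[of M "sets HH" A0] unfolding SH_def by blast
      have "aeq M A0 X {x. (\<Sum>j\<in>{1..n}. min (tt j x) t) \<le> s}"
      proof (rule aeq_AE[OF spaceM])
        show "AE x in M. x \<in> A0 \<longrightarrow> (x \<in> X) = (x \<in> {x. (\<Sum>j\<in>{1..n}. min (tt j x) t) \<le> s})"
          using AE_good
        proof eventually_elim
          case (elim x)
          show ?case
          proof
            assume x: "x \<in> A0"
            have nn: "\<And>j. j \<in> {1..k} \<Longrightarrow> 0 \<le> tt j x" using hit_good(1)[OF kN' elim] by (simp add: less_imp_le)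
            have "\<forall>j\<in>{1..k}. tt j x \<le> t" using x sum_min[of "{1..k}" "\<lambda>j. tt j x" t, OF finite_atLeastAtMost nn] by (simp add: tau_sum)
            then have "(\<Sum>j\<in>{1..n}. min (tt j x) t) = (\<Sum>j\<in>{1..n}. tt j x)"
              using nk by (intro sum.cong) auto
            then show "(x \<in> X) = (x \<in> {x. (\<Sum>j\<in>{1..n}. min (tt j x) t) \<le> s})"
              using b(1) by (simp add: tau_sum)
          qed
        qed
      qed
      then show ?thesis using cl_trans[OF B] by blast
    qed
  qed
qed

end


context setting begin

definition "SG = cl M (sets GG) A0"

lemma sets_MG: "sets (sigma UNIV SG) = SG" unfolding SG_def by (rule cl_sets[OF sa_GG])
lemma space_MG[simp]: "space (sigma UNIV SG) = UNIV" by (simp add: space_measure_of_conv)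
lemma GG_SG: "sets GG \<subseteq> SG" unfolding SG_def by (rule cl_mono)

lemma A0_GG: "A0 \<in> sets GG"
proof -
  have "{x \<in> space P \<times> space Q. tau lam E k x \<le> t} \<in> gensG" unfolding gensG_def
    by (rule UnI2, rule CollectI, rule exI[of _ k], rule exI[of _ t]) (use k t in auto)
  then show ?thesis unfolding sets_GG by auto
qed

lemma tau_pos: assumes G: "Good x" and n: "1 \<le> n" "n \<le> k" shows "0 < tau lam E n x"
  unfolding tau_sum using hit_good(1)[OF _ G] n k by (intro sum_pos) auto

lemma tau_mono: assumes G: "Good x" and n: "n \<le> k" shows "tau lam E n x \<le> tau lam E k x"
  unfolding tau_sum using hit_good(1)[OF _ G] n k by (intro sum_mono2) (auto simp: less_imp_le)

lemma tau_G: assumes n: "n \<le> k" shows "tau lam E n \<in> borel_measurable (sigma UNIV SG)"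
proof (cases "n = 0")
  case True then show ?thesis unfolding tau_sum by simp
next
  case False
  then have n1: "1 \<le> n" by simp
  show ?thesis unfolding borel_measurable_iff_le
  proof
    fix a
    have "{x. tau lam E n x \<le> a} \<in> SG"
    proof (cases "0 \<le> a")
      case True
      show ?thesis
      proof (cases "a \<le> t")
        case True
        have "{x \<in> space P \<times> space Q. tau lam E n x \<le> a} \<in> gensG"
          unfolding gensG_def
          by (rule UnI2, rule CollectI, rule exI[of _ n], rule exI[of _ a]) (use n1 n \<open>0 \<le> a\<close> True in auto)
        then show ?thesis using GG_SG unfolding sets_GG by auto
      next
        case False
        have "aeq M A0 {x. tau lam E n x \<le> a} UNIV"
        proof (rule aeq_AE[OF spaceM])
          show "AE x in M. x \<in> A0 \<longrightarrow> (x \<in> {x. tau lam E n x \<le> a}) = (x \<in> UNIV)"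
            using AE_good by eventually_elim (use tau_mono[OF _ n] False in force)
        qed
        moreover have "UNIV \<in> SG" using GG_SG sets.top[of GG] by auto
        ultimately show ?thesis unfolding SG_def using cl_trans by blast
      qed
    next
      case False
      have "aeq M A0 {x. tau lam E n x \<le> a} {}"
      proof (rule aeq_AE[OF spaceM])
        show "AE x in M. x \<in> A0 \<longrightarrow> (x \<in> {x. tau lam E n x \<le> a}) = (x \<in> {})"
          using AE_good by eventually_elim (use tau_pos[OF _ n1 n] False in force)
      qed
      moreover have "{} \<in> SG" using GG_SG sets.empty_sets[of GG] by auto
      ultimately show ?thesis unfolding SG_def using cl_trans by blast
    qed
    then show "{w \<in> space (sigma UNIV SG). tau lam E n w \<le> a} \<in> sets (sigma UNIV SG)"
      unfolding sets_MG by simp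
  qed
qed

lemma tt_G: assumes n: "n \<in> {1..k}" shows "tt n \<in> borel_measurable (sigma UNIV SG)"
proof -
  obtain m where m: "n = Suc m" using n by (cases n) auto
  have eq: "tt n x = tau lam E n x - tau lam E m x" for x
    unfolding tau_sum m by (simp add: sum.cl_ivl_Suc)
  have [measurable]: "tau lam E n \<in> borel_measurable (sigma UNIV SG)" "tau lam E m \<in> borel_measurable (sigma UNIV SG)"
    using tau_G n m by auto
  have d: "(\<lambda>x. tau lam E n x - tau lam E m x) \<in> borel_measurable (sigma UNIV SG)" by measurable
  show ?thesis
    by (rule measurable_cong[where g="\<lambda>x. tau lam E n x - tau lam E m x", THEN iffD2, OF _ d]) (simp add: eq)
qed

lemma sub_MG_GG: "subalgebra (sigma UNIV SG) GG"
  unfolding subalgebra_def using GG_SG sets_MG by simp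

lemma Jv_G: "(\<lambda>x. Jv n q (fst x)) \<in> borel_measurable (sigma UNIV SG)"
  by (rule measurable_from_subalg[OF sub_MG_GG fst_meas_GG[OF Jv_meas]])

end


context setting begin

lemma Rats_all: "(\<forall>q\<in>\<rat>. R q) \<longleftrightarrow> (\<forall>r::rat. R (real_of_rat r))" for R :: "real \<Rightarrow> bool"
  by (auto simp: Rats_def)

lemma tt_le_tau: assumes G: "Good x" and n: "n \<in> {1..k}" shows "tt n x \<le> tau lam E k x"
  unfolding tau_sum using hit_good(1)[OF _ G] n k
  by (intro member_le_sum) (auto simp: less_imp_le)

lemma E_G: assumes n: "n \<in> {1..k}" shows "(\<lambda>x. E n (snd x)) \<in> borel_measurable (sigma UNIV SG)"
  unfolding borel_measurable_iff_le
proof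
  fix c
  have n': "n \<in> {1..N}" using kN'[OF n] .
  have [measurable]: "tt n \<in> borel_measurable (sigma UNIV SG)" using tt_G[OF n] .
  have [measurable]: "\<And>q. (\<lambda>x. Jv n q (fst x)) \<in> borel_measurable (sigma UNIV SG)" by (rule Jv_G)
  define Sc where "Sc = {x \<in> space (sigma UNIV SG). \<forall>r::rat. 0 \<le> real_of_rat r \<and> real_of_rat r < tt n x \<longrightarrow> Jv n (real_of_rat r) (fst x) \<le> ennreal c}"
  have Sc: "Sc \<in> sets (sigma UNIV SG)" unfolding Sc_def by measurable
  have ae2: "AE x in M. \<forall>r::rat. 0 \<le> real_of_rat r \<and> real_of_rat r \<le> t \<longrightarrow> V n (real_of_rat r) (fst x) = Jv n (real_of_rat r) (fst x)"
  proof (rule AE_all_countable[THEN iffD2], rule allI)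
    fix r :: rat
    show "AE x in M. 0 \<le> real_of_rat r \<and> real_of_rat r \<le> t \<longrightarrow> V n (real_of_rat r) (fst x) = Jv n (real_of_rat r) (fst x)"
    proof (cases "0 \<le> real_of_rat r \<and> real_of_rat r \<le> t")
      case True
      then show ?thesis using Jv_ae[OF n'] by (auto elim!: eventually_mono)
    next
      case False show ?thesis by (rule AE_I2) (use False in blast)
    qed
  qed
  have "aeq M A0 {x. E n (snd x) \<le> c} Sc"
  proof (rule aeq_AE[OF spaceM])
    show "AE x in M. x \<in> A0 \<longrightarrow> (x \<in> {x. E n (snd x) \<le> c}) = (x \<in> Sc)"
      using AE_good ae2
    proof eventually_elim
      case (elim x)
      show ?case
      proof
        assume "x \<in> A0"
        then have tle: "tt n x \<le> t" using tt_le_tau[OF elim(1) n] by simp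
        have "E n (snd x) \<le> c \<longleftrightarrow> (\<forall>q\<in>\<rat>. 0 \<le> q \<and> q < tt n x \<longrightarrow> V n q (fst x) \<le> ennreal c)"
          by (rule hit_good(3)[OF n' elim(1)])
        also have "\<dots> \<longleftrightarrow> (\<forall>r::rat. 0 \<le> real_of_rat r \<and> real_of_rat r < tt n x \<longrightarrow> V n (real_of_rat r) (fst x) \<le> ennreal c)"
          by (rule Rats_all)
        also have "\<dots> \<longleftrightarrow> (\<forall>r::rat. 0 \<le> real_of_rat r \<and> real_of_rat r < tt n x \<longrightarrow> Jv n (real_of_rat r) (fst x) \<le> ennreal c)"
        proof -
          have eqV: "V n (real_of_rat r) (fst x) = Jv n (real_of_rat r) (fst x)"
            if "0 \<le> real_of_rat r" "real_of_rat r < tt n x" for r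
          proof -
            have "real_of_rat r \<le> t" using that(2) tle by linarith
            then show ?thesis using elim(2) that(1) by blast
          qed
          show ?thesis using eqV by auto
        qed
        finally show "(x \<in> {x. E n (snd x) \<le> c}) = (x \<in> Sc)" unfolding Sc_def by simp
      qed
    qed
  qed
  moreover have "Sc \<in> SG" using Sc unfolding sets_MG .
  ultimately have "{x. E n (snd x) \<le> c} \<in> SG" unfolding SG_def using cl_trans by blast
  then show "{w \<in> space (sigma UNIV SG). E n (snd w) \<le> c} \<in> sets (sigma UNIV SG)"
    unfolding sets_MG by simp
qed

lemma HH_G: "sets HH \<subseteq> cl M (sets GG) A0"
  unfolding sets_HH
proof (rule sigma_algebra.sigma_sets_subset[OF sigma_algebra_cl[OF sa_GG]])
  show "gensH \<subseteq> cl M (sets GG) A0"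
  proof
    fix X assume "X \<in> gensH"
    then consider (a) A where "X = A \<times> space Q" "A \<in> sets (F t)"
      | (b) n B where "X = space P \<times> {w' \<in> space Q. E n w' \<in> B}" "n \<in> {1..k}" "B \<in> sets borel"
      unfolding gensH_def by auto
    then show "X \<in> cl M (sets GG) A0"
    proof cases
      case a
      then have "X \<in> gensG" unfolding gensG_def by blast
      then have "X \<in> sets GG" unfolding sets_GG by auto
      then show ?thesis using cl_mono by blast
    next
      case b
      have "(\<lambda>x. E n (snd x)) -` B \<inter> space (sigma UNIV SG) \<in> sets (sigma UNIV SG)"
        by (rule measurable_sets[OF E_G[OF b(2)] b(3)])
      moreover have "(\<lambda>x. E n (snd x)) -` B \<inter> space (sigma UNIV SG) = X" using b(1) by auto
      ultimately have "X \<in> sets (sigma UNIV SG)" by simp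
      then have "X \<in> SG" unfolding sets_MG .
      then show ?thesis unfolding SG_def .
    qed
  qed
qed

lemma main_loc:
  assumes Y: "integrable M Y"
  shows "AE x in M. indicator A0 x * real_cond_exp M GG Y x = indicator A0 x * real_cond_exp M HH Y x"
proof -
  obtain A' where A': "A' \<in> sets HH" "aeq M UNIV A0 A'" using A0_H by blast
  show ?thesis
    by (rule cond_exp_trace2[OF probM spaceM sub_GG sub_HH A0_GG A'(1) A'(2) HH_G GG_H Y])
qed

end

theorem mainTheorem3:
  fixes P :: "'a::polish_space measure" and Q :: "'b::polish_space measure"
    and F :: "real \<Rightarrow> 'a measure"
    and N :: nat
    and E :: "nat \<Rightarrow> 'b \<Rightarrow> real"
    and lam :: "nat \<Rightarrow> real \<Rightarrow> 'a \<Rightarrow> real"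
    and Y :: "'a \<times> 'b \<Rightarrow> real"
    and k :: nat and t :: real
  assumes P: "prob_space P" and P_borel: "sets P = sets borel"
    and Q: "prob_space Q" and Q_borel: "sets Q = sets borel"
    and F_sub: "\<And>s. 0 \<le> s \<Longrightarrow> subalgebra P (F s)"
    and F_mono: "\<And>s r. 0 \<le> s \<Longrightarrow> s \<le> r \<Longrightarrow> sets (F s) \<subseteq> sets (F r)"
    and E_exp: "\<And>n. n \<in> {1..N} \<Longrightarrow> distributed Q lborel (E n) (exponential_density 1)"
    and E_indep: "prob_space.indep_vars Q (\<lambda>_. borel) E {1..N}"
    and lam_meas: "\<And>n. n \<in> {1..N} \<Longrightarrow>
          (\<lambda>(s, w). lam n s w) \<in> borel_measurable (restrict_space borel {0..} \<Otimes>\<^sub>M P)"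
    and lam_nonneg: "\<And>n s w. n \<in> {1..N} \<Longrightarrow> 0 \<le> s \<Longrightarrow> 0 \<le> lam n s w"
    and lam_adapted: "\<And>n s. n \<in> {1..N} \<Longrightarrow> 0 \<le> s \<Longrightarrow> lam n s \<in> borel_measurable (F s)"
    and lam_fin: "\<And>n. n \<in> {1..N} \<Longrightarrow>
          AE w in P. \<forall>r\<ge>0. (\<integral>\<^sup>+ s\<in>{0..r}. ennreal (lam n s w) \<partial>lborel) < \<infinity>"
    and lam_inf: "\<And>n. n \<in> {1..N} \<Longrightarrow>
          AE w in P. (\<integral>\<^sup>+ s\<in>{0..}. ennreal (lam n s w) \<partial>lborel) = \<infinity>"
    and Y_meas: "Y \<in> borel_measurable (GN_measure P Q F)"
    and Y_int: "integrable (completion (P \<Otimes>\<^sub>M Q)) Y"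
    and k: "k \<in> {1..N}" and t: "0 \<le> t"
  shows "AE x in completion (P \<Otimes>\<^sub>M Q).
           indicator {x. tau lam E k x \<le> t} x
             * real_cond_exp (completion (P \<Otimes>\<^sub>M Q)) (G_sigma P Q F lam E k t) Y x
         = indicator {x. tau lam E k x \<le> t} x
             * real_cond_exp (completion (P \<Otimes>\<^sub>M Q)) (FE_sigma P Q F E k t) Y x"
proof -
  interpret S: setting P Q F N E lam k t
    by (rule setting.intro[OF P P_borel Q Q_borel F_sub F_mono E_exp lam_meas lam_adapted lam_fin lam_inf k t])
  show ?thesis by (rule S.main_loc[OF Y_int])
qed

end
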